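(* Let $r,a,b$ be positive integers with $\gcd(r,a)=\gcd(r,b)=1$. Then the isolated cyclic quotient singularity $\frac{1}{r}(a,b)$ is a T-singularity if and only if $r\mid(a+b)^2$.
   Context: $\frac{1}{r}(a,b)$ denotes the cyclic quotient singularity $\mathbb{C}^2/\mu_r$ with $\zeta\cdot(x,y)=(\zeta^ax,\zeta^by)$; two such are isomorphic in particular when one is obtained from the other by multiplying $(a,b)$ by an integer coprime to $r$ or swapping $a$ and $b$. A T-singularity is a quotient surface singularity admitting a $\mathbb{Q}$-Gorenstein one-parameter smoothing; by Kollár–Shepherd-Barron, the cyclic quotient T-singularities are exactly those isomorphic to $\frac{1}{nd^2}(1,dna-1)$ for positive integers $n,d,a$ with $\gcd(d,a)=1$. *)

theory Defs
  imports "HOL-Number_Theory.Number_Theory"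
begin

text \<open>A cyclic quotient singularity 1/r(a,b) is encoded by the triple (r,a,b) of integers.
  Isomorphism of isolated cyclic quotient singularities: same order r, and the weights
  agree modulo r up to multiplication by a unit modulo r and swapping the two weights.\<close>

definition cqs_iso :: "int \<Rightarrow> int \<Rightarrow> int \<Rightarrow> int \<Rightarrow> int \<Rightarrow> int \<Rightarrow> bool" where
  "cqs_iso r a b r' a' b' \<longleftrightarrow> r = r' \<and>
     (\<exists>u. coprime u r \<and>
        (([a' = u * a] (mod r) \<and> [b' = u * b] (mod r)) \<or>
         ([a' = u * b] (mod r) \<and> [b' = u * a] (mod r))))"

text \<open>Cyclic quotient T-singularity (Kollar--Shepherd-Barron): isomorphic to
  1/(n d^2)(1, d n a - 1) with n, d, a positive and gcd(d,a) = 1.\<close>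

definition cqs_T_sing :: "int \<Rightarrow> int \<Rightarrow> int \<Rightarrow> bool" where
  "cqs_T_sing r a b \<longleftrightarrow>
     (\<exists>n d c. n > 0 \<and> d > 0 \<and> c > 0 \<and> coprime d c \<and>
        cqs_iso r a b (n * d^2) 1 (d * n * c - 1))"

end

theory Submission
  imports Defs
begin

lemma fwd:
  fixes r a b n d c u :: int
  assumes r: "r = n * d^2" and cu: "coprime u r"
    and h1: "r dvd 1 - u * a" and h2: "r dvd (d*n*c - 1) - u * b"
  shows "r dvd (a + b)^2"
proof -
  have "r dvd (1 - u*a) + ((d*n*c - 1) - u*b)" using h1 h2 by (rule dvd_add)
  hence e: "r dvd d*n*c - u*(a+b)" by (simp add: algebra_simps)
  have "r dvd (d*n*c)^2" using r by (simp add: power2_eq_square)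
  moreover have "r dvd (d*n*c - u*(a+b)) * (d*n*c + u*(a+b))" using e by simp
  ultimately have "r dvd (d*n*c)^2 - (d*n*c - u*(a+b)) * (d*n*c + u*(a+b))"
    by (rule dvd_diff)
  hence "r dvd (u^2) * (a+b)^2" by (simp add: algebra_simps power2_eq_square)
  moreover have "coprime r (u^2)" using cu by (simp add: coprime_commute)
  ultimately show ?thesis using coprime_dvd_mult_right_iff by blast
qed

theorem lemma3p6:
  fixes r a b :: int
  assumes "r > 0" and "a > 0" and "b > 0"
    and "coprime r a" and "coprime r b"
  shows "cqs_T_sing r a b \<longleftrightarrow> r dvd (a + b)^2"
proof
  assume "cqs_T_sing r a b"
  then obtain n d c u where r: "r = n * d^2" and cu: "coprime u r" and
    h: "([1 = u * a] (mod r) \<and> [d*n*c - 1 = u * b] (mod r)) \<or>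
         ([1 = u * b] (mod r) \<and> [d*n*c - 1 = u * a] (mod r))"
    unfolding cqs_T_sing_def cqs_iso_def by blast
  from h show "r dvd (a + b)^2"
  proof
    assume "[1 = u * a] (mod r) \<and> [d*n*c - 1 = u * b] (mod r)"
    thus ?thesis by (intro fwd[OF r cu]) (auto simp: cong_iff_dvd_diff)
  next
    assume "[1 = u * b] (mod r) \<and> [d*n*c - 1 = u * a] (mod r)"
    hence "r dvd (b + a)^2" by (intro fwd[OF r cu]) (auto simp: cong_iff_dvd_diff)
    thus ?thesis by (simp add: add.commute)
  qed
next
  assume rs: "r dvd (a + b)^2"
  define s where "s = a + b"
  define g where "g = gcd r s"
  have gpos: "g > 0" using assms(1) g_def by simp
  obtain x y where xy: "x * r + y * s = g" using bezout_int g_def by metis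
  have "g^2 = r * (x^2 * r + 2*x*y*s) + y^2 * s^2"
    using xy by (auto simp: algebra_simps power2_eq_square)
  moreover have "r dvd y^2 * s^2" using rs s_def by simp
  ultimately have rg: "r dvd g^2" by (metis dvd_add dvd_triv_left)
  define d where "d = r div g"
  have gr: "g dvd r" using g_def by simp
  have gs: "g dvd s" using g_def by simp
  have rgd: "r = g * d" using gr d_def by simp
  have dpos: "d > 0" using rgd gpos assms(1) by (simp add: zero_less_mult_iff)
  have dg: "d dvd g" using rg rgd gpos by (simp add: power2_eq_square)
  define n where "n = g div d"
  have gdn: "g = d * n" using dg n_def by simp
  have npos: "n > 0" using gdn gpos dpos by (simp add: zero_less_mult_iff)
  define k where "k = s div g"
  have sgk: "s = g * k" using gs k_def by simp
  have cdk: "coprime d k" using div_gcd_coprime[of r s] assms(1) d_def k_def g_def by simp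
  obtain u where u: "[a * u = 1] (mod r)" using cong_solve_coprime_int assms(4)
    by (metis coprime_commute)
  have cur: "coprime u r"
  proof -
    have "coprime (a*u) r" using u by (metis cong_imp_coprime cong_sym coprime_1_left)
    thus ?thesis by simp
  qed
  have cud: "coprime u d" using cur rgd by (metis coprime_mult_right_iff)
  define c where "c = (u*k) mod d + d"
  have cpos: "c > 0" using dpos c_def by (simp add: add_nonneg_pos)
  have "coprime d (u*k)" using cud cdk by (simp add: coprime_commute)
  moreover have "[u*k = c] (mod d)" using c_def by (simp add: cong_def)
  ultimately have cdc: "coprime d c" using cong_imp_coprime by (metis coprime_commute)
  have dc: "d dvd c - u*k"
  proof -
    have "c - u*k = d * (1 - (u*k) div d)" using c_def
      by (simp add: algebra_simps minus_div_mult_eq_mod[symmetric])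
    thus ?thesis by simp
  qed
  have r2: "r = n * d^2" using rgd gdn by (simp add: power2_eq_square algebra_simps)
  have ua: "r dvd u*a - 1" using u by (simp add: cong_iff_dvd_diff mult.commute)
  have "r dvd g * (c - u*k)" using dc rgd by simp
  hence "r dvd g * (c - u*k) + (u*a - 1)" using ua by (rule dvd_add)
  moreover have "g * (c - u*k) + (u*a - 1) = (d*n*c - 1) - u*b"
  proof -
    have "u*(a+b) = u*(g*k)" using sgk s_def by simp
    hence e1: "u*b = g*(u*k) - u*a" by (simp add: algebra_simps)
    show ?thesis using e1 gdn by (simp add: algebra_simps)
  qed
  ultimately have ub: "r dvd (d*n*c - 1) - u*b" by simp
  have "[1 = u * a] (mod r)" using u by (simp add: cong_sym mult.commute)
  moreover have "[d*n*c - 1 = u * b] (mod r)" using ub by (simp add: cong_iff_dvd_diff)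
  ultimately have "cqs_iso r a b (n * d^2) 1 (d * n * c - 1)"
    unfolding cqs_iso_def using r2 cur by blast
  thus "cqs_T_sing r a b" unfolding cqs_T_sing_def using npos dpos cpos cdc by blast
qed

end
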